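(* Let $T,L$ be positive integers and $\epsilon\in(0,1)$. For $\rho=\{\rho_t^l\}\in[0,1]^{T\times L}$ let $F(\rho)=\sum_{t,l}\rho_t^l r_t^l b_t^l(\rho_t^l)$, $G(\rho)=1-\prod_{t=1}^T\prod_{l=1}^L\rho_t^l$, $H(\rho)=\sum_{t,l}(1-\rho_t^l)$. Let $\rho^\ast$ be an optimal solution of PA1: $\min F(\rho)$ s.t. $G(\rho)\le\epsilon$, $\rho\in[0,1]^{T\times L}$. Let $\tilde\lambda,\tilde\rho$ be optimal solutions of $\max_{\lambda\ge0}\min_{\rho\in[0,1]^{T\times L}}\{F(\rho)+\lambda[H(\rho)-\epsilon]\}$. Then $$0\le F(\tilde\rho)-F(\rho^\ast)\le\tilde\lambda\,(TL-1)\epsilon.$$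
   Context: For each $t\in\{1,\dots,T\}$, $l\in\{1,\dots,L\}$: $r_t^l$ is a positive integer and $b_t^l:[0,1]\to[0,b^l_{\max}]$ is strictly increasing and convex. $\rho_t^l$ is the probability of the event of successfully recruiting $r_t^l$ participants at time $t$, location $l$, and these events are independent. PA2 denotes the problem $\min F(\rho)$ s.t. $H(\rho)\le\epsilon$, $\rho\in[0,1]^{T\times L}$, so $F(\tilde\rho)$ is the optimal value of PA2. *)

theory Defs
  imports "HOL-Analysis.Analysis"
begin

text \<open>Index set: t in {1..T}, l in {1..L}. A decision rho is a function
  nat => nat => real, only its values on the index box matter.\<close>

definition feasible_box :: "nat \<Rightarrow> nat \<Rightarrow> (nat \<Rightarrow> nat \<Rightarrow> real) \<Rightarrow> bool" where
  "feasible_box T L \<rho> \<longleftrightarrow> (\<forall>t\<in>{1..T}. \<forall>l\<in>{1..L}. 0 \<le> \<rho> t l \<and> \<rho> t l \<le> 1)"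

definition objF :: "nat \<Rightarrow> nat \<Rightarrow> (nat \<Rightarrow> nat \<Rightarrow> nat) \<Rightarrow> (nat \<Rightarrow> nat \<Rightarrow> real \<Rightarrow> real)
    \<Rightarrow> (nat \<Rightarrow> nat \<Rightarrow> real) \<Rightarrow> real" where
  "objF T L r b \<rho> = (\<Sum>t\<in>{1..T}. \<Sum>l\<in>{1..L}. \<rho> t l * real (r t l) * b t l (\<rho> t l))"

definition consG :: "nat \<Rightarrow> nat \<Rightarrow> (nat \<Rightarrow> nat \<Rightarrow> real) \<Rightarrow> real" where
  "consG T L \<rho> = 1 - (\<Prod>t\<in>{1..T}. \<Prod>l\<in>{1..L}. \<rho> t l)"

definition consH :: "nat \<Rightarrow> nat \<Rightarrow> (nat \<Rightarrow> nat \<Rightarrow> real) \<Rightarrow> real" where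
  "consH T L \<rho> = (\<Sum>t\<in>{1..T}. \<Sum>l\<in>{1..L}. (1 - \<rho> t l))"

definition PA1_optimal where
  "PA1_optimal T L r b \<epsilon> \<rho>s \<longleftrightarrow>
     feasible_box T L \<rho>s \<and> consG T L \<rho>s \<le> \<epsilon> \<and>
     (\<forall>\<rho>. feasible_box T L \<rho> \<and> consG T L \<rho> \<le> \<epsilon> \<longrightarrow> objF T L r b \<rho>s \<le> objF T L r b \<rho>)"

definition lagr where
  "lagr T L r b \<epsilon> \<rho> lam = objF T L r b \<rho> + lam * (consH T L \<rho> - \<epsilon>)"

definition dualfun where
  "dualfun T L r b \<epsilon> lam = (INF \<rho>\<in>{\<rho>. feasible_box T L \<rho>}. lagr T L r b \<epsilon> \<rho> lam)"

definition maxmin_optimal where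
  "maxmin_optimal T L r b \<epsilon> lamt \<rho>t \<longleftrightarrow>
     0 \<le> lamt \<and> feasible_box T L \<rho>t \<and>
     (\<forall>\<rho>. feasible_box T L \<rho> \<longrightarrow> lagr T L r b \<epsilon> \<rho>t lamt \<le> lagr T L r b \<epsilon> \<rho> lamt) \<and>
     (\<forall>lam\<ge>0. dualfun T L r b \<epsilon> lam \<le> dualfun T L r b \<epsilon> lamt)"

end

theory Submission
  imports Defs "HOL-Analysis.Analysis"
begin


lemma strong_dual:
  fixes S :: "'a set" and F H :: "'a \<Rightarrow> real" and \<epsilon> :: real
  assumes zS: "z \<in> S" and Hz: "H z \<le> 0" and Fnn: "\<And>x. x \<in> S \<Longrightarrow> 0 \<le> F x"
    and Hnn: "\<And>x. x \<in> S \<Longrightarrow> 0 \<le> H x" and ep: "\<epsilon> > 0"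
    and conv: "\<And>x y \<theta>. x \<in> S \<Longrightarrow> y \<in> S \<Longrightarrow> 0 \<le> \<theta> \<Longrightarrow> \<theta> \<le> 1 \<Longrightarrow>
       \<exists>w\<in>S. F w \<le> \<theta>*F x + (1-\<theta>)*F y \<and> H w \<le> \<theta>*H x + (1-\<theta>)*H y"
  shows "\<exists>lam\<ge>0. \<forall>x\<in>S. F x + lam*(H x - \<epsilon>) \<ge> Inf (F ` {x\<in>S. H x \<le> \<epsilon>})"
proof -
  define v where "v u = Inf (F ` {x\<in>S. H x \<le> u})" for u
  have ne: "F ` {x\<in>S. H x \<le> u} \<noteq> {}" if "0 \<le> u" for u using zS Hz that by force
  have bb: "bdd_below (F ` {x\<in>S. H x \<le> u})" for u
    by (rule bdd_belowI[of _ 0]) (use Fnn in auto)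
  have v1: "v u \<le> F x" if "x \<in> S" "H x \<le> u" for x u
    unfolding v_def by (rule cInf_lower) (use that bb in auto)
  have v2: "\<exists>x\<in>S. H x \<le> u \<and> F x < v u + d" if u0: "0 \<le> u" and d0: "0 < d" for u d
  proof -
    have "v u < v u + d" using d0 by simp
    then obtain y where "y \<in> F ` {x\<in>S. H x \<le> u}" "y < v u + d"
      using cInf_less_iff[OF ne[OF u0] bb] unfolding v_def by blast
    then show ?thesis by auto
  qed
  have v3: "v u' \<le> v u" if uu: "0 \<le> u" "u \<le> u'" for u u'
  proof (rule ccontr)
    assume "\<not> ?thesis"
    then obtain x where "x \<in> S" "H x \<le> u" "F x < v u'" using v2[OF uu(1), of "v u' - v u"] by auto
    with v1[of x u'] uu show False by auto
  qed
  have v4: "v (\<theta>*u + (1-\<theta>)*w) \<le> \<theta>* v u + (1-\<theta>)* v w"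
    if hh: "0 \<le> u" "0 \<le> w" "0 \<le> \<theta>" "\<theta> \<le> 1" for u w \<theta>
  proof (rule ccontr)
    assume nt: "\<not> ?thesis"
    define g where "g = v (\<theta>*u + (1-\<theta>)*w) - (\<theta>* v u + (1-\<theta>)* v w)"
    have g: "g > 0" using nt g_def by simp
    obtain x1 where x1: "x1 \<in> S" "H x1 \<le> u" "F x1 < v u + g/2" using v2[OF hh(1), of "g/2"] g by auto
    obtain x2 where x2: "x2 \<in> S" "H x2 \<le> w" "F x2 < v w + g/2" using v2[OF hh(2), of "g/2"] g by auto
    obtain y where y: "y \<in> S" "F y \<le> \<theta>*F x1 + (1-\<theta>)*F x2" "H y \<le> \<theta>*H x1 + (1-\<theta>)*H x2"
      using conv[OF x1(1) x2(1) hh(3,4)] by blast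
    have "\<theta>*H x1 + (1-\<theta>)*H x2 \<le> \<theta>*u + (1-\<theta>)*w"
      using x1 x2 hh by (intro add_mono mult_left_mono) auto
    then have "v (\<theta>*u + (1-\<theta>)*w) \<le> F y" using y by (intro v1) auto
    moreover have "\<theta>*F x1 + (1-\<theta>)*F x2 \<le> \<theta>*(v u + g/2) + (1-\<theta>)*(v w + g/2)"
      using x1 x2 hh by (intro add_mono mult_left_mono) auto
    moreover have "\<theta>*(v u + g/2) + (1-\<theta>)*(v w + g/2) = \<theta> * v u + (1-\<theta>) * v w + g/2"
      by (simp add: field_simps)
    ultimately show False using y g g_def by linarith
  qed
  have slope: "(v \<epsilon> - v u)*(w-\<epsilon>) \<le> (v w - v \<epsilon>)*(\<epsilon>-u)" if "0 \<le> u" "u < \<epsilon>" "\<epsilon> < w" for u w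
  proof -
    define \<theta> where "\<theta> = (w-\<epsilon>)/(w-u)"
    have th: "0 \<le> \<theta>" "\<theta> \<le> 1" using that by (auto simp: \<theta>_def field_simps)
    have wu: "w - u \<noteq> 0" using that by simp
    have "\<theta>*u + (1-\<theta>)*w = ((w-\<epsilon>)*u + (w - u - (w - \<epsilon>))*w)/(w-u)"
      using wu by (simp add: \<theta>_def divide_simps)
    also have "\<dots> = \<epsilon>*(w-u)/(w-u)" by (simp add: algebra_simps)
    finally have e: "\<theta>*u + (1-\<theta>)*w = \<epsilon>" using wu by simp
    have "v \<epsilon> \<le> \<theta>* v u + (1-\<theta>)* v w" using v4[OF that(1) _ th] that e by auto
    then have "(w-u) * v \<epsilon> \<le> (w-u)*(\<theta>* v u + (1-\<theta>)* v w)" using that by (intro mult_left_mono) auto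
    also have "\<dots> = ((w-u)*\<theta>) * v u + ((w-u)*(1-\<theta>)) * v w" by (simp add: algebra_simps)
    also have "(w-u)*\<theta> = w-\<epsilon>" using wu by (simp add: \<theta>_def)
    also have "(w-u)*(1-\<theta>) = \<epsilon>-u" using wu by (simp add: \<theta>_def field_simps)
    finally show ?thesis by (simp add: algebra_simps)
  qed
  define s where "s = Sup ((\<lambda>u. (v \<epsilon> - v u)/(\<epsilon> - u)) ` {0..<\<epsilon>})"
  have sne: "(\<lambda>u. (v \<epsilon> - v u)/(\<epsilon> - u)) ` {0..<\<epsilon>} \<noteq> {}" using ep by auto
  have rs: "(v \<epsilon> - v u)/(\<epsilon> - u) \<le> (v w - v \<epsilon>)/(w-\<epsilon>)" if "0 \<le> u" "u < \<epsilon>" "\<epsilon> < w" for u w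
    using slope[OF that] that by (simp add: divide_simps mult.commute)
  have sba: "bdd_above ((\<lambda>u. (v \<epsilon> - v u)/(\<epsilon> - u)) ` {0..<\<epsilon>})"
    by (rule bdd_aboveI[of _ "(v (\<epsilon>+1) - v \<epsilon>)/((\<epsilon>+1)-\<epsilon>)"]) (use rs[of _ "\<epsilon>+1"] in auto)
  have s_up: "(v \<epsilon> - v u)/(\<epsilon> - u) \<le> s" if "0 \<le> u" "u < \<epsilon>" for u
    unfolding s_def by (rule cSup_upper) (use that sba in auto)
  have s_le: "s \<le> (v w - v \<epsilon>)/(w-\<epsilon>)" if "\<epsilon> < w" for w
    unfolding s_def by (rule cSup_least[OF sne]) (use rs that in auto)
  have s0: "s \<le> 0"
    unfolding s_def
  proof (rule cSup_least[OF sne])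
    fix y assume "y \<in> (\<lambda>u. (v \<epsilon> - v u)/(\<epsilon> - u)) ` {0..<\<epsilon>}"
    then obtain u where u: "0 \<le> u" "u < \<epsilon>" "y = (v \<epsilon> - v u)/(\<epsilon> - u)" by auto
    have "v \<epsilon> \<le> v u" using v3 u by auto
    then show "y \<le> 0" using u by (simp add: divide_le_0_iff)
  qed
  show ?thesis
  proof (intro exI[of _ "-s"] conjI ballI)
    show "0 \<le> -s" using s0 by simp
    fix x assume x: "x \<in> S"
    define u where "u = H x"
    have u0: "0 \<le> u" using Hnn x u_def by simp
    have Fv: "v u \<le> F x" using v1 x u_def by simp
    have "v \<epsilon> \<le> v u + (-s)*(u - \<epsilon>)"
    proof (cases u \<epsilon> rule: linorder_cases)
      case less
      have "(v \<epsilon> - v u)/(\<epsilon> - u) \<le> s" using s_up u0 less by simp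
      then have "v \<epsilon> - v u \<le> s*(\<epsilon>-u)" using less by (simp add: divide_simps)
      then show ?thesis by (simp add: algebra_simps)
    next
      case equal then show ?thesis by simp
    next
      case greater
      have "s \<le> (v u - v \<epsilon>)/(u-\<epsilon>)" using s_le greater by simp
      then have "s*(u-\<epsilon>) \<le> v u - v \<epsilon>" using greater by (simp add: divide_simps)
      then show ?thesis by (simp add: algebra_simps)
    qed
    then show "Inf (F ` {x\<in>S. H x \<le> \<epsilon>}) \<le> F x + (-s)*(H x - \<epsilon>)"
      using Fv u_def v_def by simp
  qed
qed



lemma mono_prod:
  fixes g :: "real \<Rightarrow> real"
  assumes "strict_mono_on {0..1} g" "x \<in> {0..1}" "y \<in> {0..1}"
  shows "0 \<le> (x-y)*(g x - g y)"
proof (cases x y rule: linorder_cases)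
  case less
  then have "g x < g y" using assms by (auto simp: strict_mono_on_def)
  then show ?thesis using less by (simp add: mult_nonpos_nonpos)
next
  case greater
  then have "g y < g x" using assms by (auto simp: strict_mono_on_def)
  then show ?thesis using greater by simp
qed simp

lemma key_ineq:
  fixes g :: "real \<Rightarrow> real"
  assumes mono: "strict_mono_on {0..1} g" and cv: "convex_on {0..1} g"
    and x: "x \<in> {0..1}" and y: "y \<in> {0..1}" and th: "0 \<le> \<theta>" "\<theta> \<le> 1" and c: "0 \<le> c"
  shows "(\<theta>*x+(1-\<theta>)*y)*c*g(\<theta>*x+(1-\<theta>)*y)
     \<le> \<theta>*(x*c*g x) + (1-\<theta>)*(y*c*g y) - c*\<theta>*(1-\<theta>)*((x-y)*(g x - g y))"
proof -
  define z where "z = \<theta>*x+(1-\<theta>)*y"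
  have z0: "0 \<le> z" using x y th by (auto simp: z_def)
  have "g z \<le> (1-(1-\<theta>)) * g x + (1-\<theta>) * g y"
    using convex_onD[OF cv, of "1-\<theta>" x y] x y th by (simp add: z_def)
  then have gz: "g z \<le> \<theta> * g x + (1-\<theta>) * g y" by simp
  have "z * g z \<le> z * (\<theta> * g x + (1-\<theta>) * g y)" using gz z0 by (rule mult_left_mono)
  also have "\<dots> = \<theta>*(x*g x) + (1-\<theta>)*(y*g y) - \<theta>*(1-\<theta>)*((x-y)*(g x - g y))"
    by (simp add: z_def algebra_simps)
  finally have "c * (z * g z) \<le> c * (\<theta>*(x*g x) + (1-\<theta>)*(y*g y) - \<theta>*(1-\<theta>)*((x-y)*(g x - g y)))"
    using c by (rule mult_left_mono)
  also have "c * (\<theta>*(x*g x) + (1-\<theta>)*(y*g y) - \<theta>*(1-\<theta>)*((x-y)*(g x - g y)))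
     = \<theta>*(x*c*g x) + (1-\<theta>)*(y*c*g y) - c*\<theta>*(1-\<theta>)*((x-y)*(g x - g y))"
    by (simp add: algebra_simps)
  finally have "z*c*g z \<le> \<theta>*(x*c*g x) + (1-\<theta>)*(y*c*g y) - c*\<theta>*(1-\<theta>)*((x-y)*(g x - g y))"
    by (simp add: mult.assoc mult.left_commute)
  then show ?thesis unfolding z_def .
qed

lemma incr:
  fixes g :: "real \<Rightarrow> real"
  assumes cv: "convex_on {0..1} g" and "0 \<le> x" "x \<le> y" "y \<le> 1"
  shows "g (y-x) - g 0 \<le> g y - g x"
proof (cases "y = 0")
  case True then show ?thesis using assms by simp
next
  case False
  then have yp: "y > 0" using assms by simp
  have "g ((1 - x/y) *\<^sub>R 0 + (x/y) *\<^sub>R y) \<le> (1 - x/y) * g 0 + (x/y) * g y"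
    using assms yp by (intro convex_onD[OF cv]) auto
  then have a: "g x \<le> (1 - x/y) * g 0 + (x/y) * g y" using yp by simp
  have "g ((1 - (y-x)/y) *\<^sub>R 0 + ((y-x)/y) *\<^sub>R y) \<le> (1 - (y-x)/y) * g 0 + ((y-x)/y) * g y"
    using assms yp by (intro convex_onD[OF cv]) auto
  then have b: "g (y-x) \<le> (1 - (y-x)/y) * g 0 + ((y-x)/y) * g y" using yp by simp
  have "(1 - x/y) * g 0 + (x/y) * g y + ((1 - (y-x)/y) * g 0 + ((y-x)/y) * g y) = g 0 + g y"
    using yp by (simp add: field_simps)
  then show ?thesis using a b by linarith
qed

lemma gap:
  fixes g :: "real \<Rightarrow> real"
  assumes mono: "strict_mono_on {0..1} g" and cv: "convex_on {0..1} g"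
    and x: "x \<in> {0..1}" and y: "y \<in> {0..1}" and d: "0 < d" "d \<le> \<bar>x - y\<bar>"
  shows "d*(g d - g 0) \<le> (x-y)*(g x - g y)"
proof -
  have main: "d*(g d - g 0) \<le> (b-a)*(g b - g a)" if ab: "0 \<le> a" "a \<le> b" "b \<le> 1" "d \<le> b - a" for a b
  proof -
    have d1: "d \<le> 1" using ab d by simp
    have "g d - g 0 \<le> g (b-a) - g 0"
      using mono d ab d1 by (cases "d = b-a") (auto simp: strict_mono_on_def intro: less_imp_le)
    also have "\<dots> \<le> g b - g a" using incr[OF cv ab(1-3)] .
    finally have h: "g d - g 0 \<le> g b - g a" .
    have "0 \<le> g d - g 0" using mono d d1 by (auto simp: strict_mono_on_def intro: less_imp_le)
    then show ?thesis using h ab d by (intro mult_mono) auto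
  qed
  show ?thesis
  proof (cases "x \<le> y")
    case True
    have "(x-y)*(g x - g y) = (y-x)*(g y - g x)" by (simp add: algebra_simps)
    then show ?thesis using main[of x y] True x y d by auto
  next
    case False
    then show ?thesis using main[of y x] x y d by auto
  qed
qed

lemma prod_bound:
  fixes f :: "'a \<Rightarrow> real"
  assumes "finite A" "\<And>i. i \<in> A \<Longrightarrow> 0 \<le> f i \<and> f i \<le> 1"
  shows "1 - prod f A \<le> (\<Sum>i\<in>A. 1 - f i)"
  using assms
proof (induction A rule: finite_induct)
  case empty then show ?case by simp
next
  case (insert a A)
  have P: "0 \<le> prod f A" "prod f A \<le> 1" using insert by (auto intro: prod_nonneg prod_le_1)
  have fa: "0 \<le> f a" "f a \<le> 1" using insert by auto
  have IH: "1 - prod f A \<le> (\<Sum>i\<in>A. 1 - f i)" using insert by auto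
  have "0 \<le> (1 - f a) * (1 - prod f A)" using P fa by simp
  then have "1 - f a * prod f A \<le> (1 - f a) + (1 - prod f A)" by (simp add: algebra_simps)
  then show ?case using insert IH by simp
qed

lemma prod_le_factor:
  fixes f :: "'a \<Rightarrow> real"
  assumes "finite A" "a \<in> A" "\<And>i. i \<in> A \<Longrightarrow> 0 \<le> f i \<and> f i \<le> 1"
  shows "prod f A \<le> f a"
proof -
  have "prod f A = f a * prod f (A - {a})" using assms by (simp add: prod.remove)
  also have "\<dots> \<le> f a * 1"
    using assms by (intro mult_left_mono prod_le_1) auto
  finally show ?thesis by simp
qed



lemma aux: fixes lt fm c fx frt m a b :: real 
  assumes "c = (a+b)/2" "lt \<le> fm + c" "fm \<le> fx/2+frt/2 - m" "lt = frt + b" shows "m \<le> (fx + a - lt)/2" 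
proof -
  have "m \<le> fx/2 + frt/2 - fm" using assms(3) by linarith
  also have "\<dots> \<le> fx/2 + frt/2 + c - lt" using assms(2) by linarith
  also have "\<dots> = (fx + a - lt)/2" using assms(1,4) by (simp add: field_simps)
  finally show ?thesis .
qed

theorem theorem2:
  fixes T L :: nat and \<epsilon> :: real
    and r :: "nat \<Rightarrow> nat \<Rightarrow> nat" and b :: "nat \<Rightarrow> nat \<Rightarrow> real \<Rightarrow> real"
    and bmax :: "nat \<Rightarrow> real"
    and \<rho>s \<rho>t :: "nat \<Rightarrow> nat \<Rightarrow> real" and lamt :: real
  assumes "T \<ge> 1" and "L \<ge> 1"
    and "0 < \<epsilon>" and "\<epsilon> < 1"
    and "\<And>t l. t \<in> {1..T} \<Longrightarrow> l \<in> {1..L} \<Longrightarrow> r t l > 0"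
    and "\<And>t l. t \<in> {1..T} \<Longrightarrow> l \<in> {1..L} \<Longrightarrow> b t l ` {0..1} \<subseteq> {0..bmax l}"
    and "\<And>t l. t \<in> {1..T} \<Longrightarrow> l \<in> {1..L} \<Longrightarrow> strict_mono_on {0..1} (b t l)"
    and "\<And>t l. t \<in> {1..T} \<Longrightarrow> l \<in> {1..L} \<Longrightarrow> convex_on {0..1} (b t l)"
    and "PA1_optimal T L r b \<epsilon> \<rho>s"
    and "maxmin_optimal T L r b \<epsilon> lamt \<rho>t"
  shows "0 \<le> objF T L r b \<rho>t - objF T L r b \<rho>s
    \<and> objF T L r b \<rho>t - objF T L r b \<rho>s \<le> lamt * (real (T * L) - 1) * \<epsilon>"
proof -
  note T1 = assms(1) and L1 = assms(2) and ep = assms(3) and ep1 = assms(4)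
  note rpos = assms(5) and brange = assms(6) and bmono = assms(7) and bconv = assms(8)
  define S where "S = {\<rho>. feasible_box T L \<rho>}"
  define Fo where "Fo = objF T L r b"
  define Ho where "Ho = consH T L"
  have r1: "1 \<le> real (r t l)" if "t \<in> {1..T}" "l \<in> {1..L}" for t l
    using rpos[OF that] by simp
  have bnn: "0 \<le> b t l x" if "t \<in> {1..T}" "l \<in> {1..L}" "x \<in> {0..1}" for t l x
  proof -
    have "b t l x \<in> b t l ` {0..1}" using that(3) by blast
    then show ?thesis using brange[OF that(1,2)] by auto
  qed
  have inS: "\<rho> \<in> S \<longleftrightarrow> (\<forall>t\<in>{1..T}. \<forall>l\<in>{1..L}. 0 \<le> \<rho> t l \<and> \<rho> t l \<le> 1)" for \<rho>
    by (simp add: S_def feasible_box_def)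
  have Fnn: "0 \<le> Fo x" if "x \<in> S" for x
    unfolding Fo_def objF_def using that bnn
    by (intro sum_nonneg) (auto simp: inS)
  have Hnn: "0 \<le> Ho x" if "x \<in> S" for x
    unfolding Ho_def consH_def using that
    by (intro sum_nonneg) (auto simp: inS)
  have mixS: "(\<lambda>t l. \<theta> * x t l + (1-\<theta>) * y t l) \<in> S"
    if "x \<in> S" "y \<in> S" "0 \<le> \<theta>" "\<theta> \<le> 1" for x y \<theta>
  proof -
    have "0 \<le> \<theta> * a + (1-\<theta>) * c \<and> \<theta> * a + (1-\<theta>) * c \<le> 1"
      if "0 \<le> a" "a \<le> 1" "0 \<le> c" "c \<le> 1" for a c
    proof -
      have "\<theta> * a \<le> \<theta>" "(1-\<theta>) * c \<le> 1 - \<theta>" using that \<open>0 \<le> \<theta>\<close> \<open>\<theta> \<le> 1\<close>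
        by (auto intro: mult_left_le)
      then show ?thesis using that \<open>0 \<le> \<theta>\<close> \<open>\<theta> \<le> 1\<close> by auto
    qed
    then show ?thesis using that by (auto simp: inS)
  qed
  have Hmix: "Ho (\<lambda>t l. \<theta> * x t l + (1-\<theta>) * y t l) = \<theta> * Ho x + (1-\<theta>) * Ho y" for x y \<theta>
  proof -
    have "Ho (\<lambda>t l. \<theta> * x t l + (1-\<theta>) * y t l)
        = (\<Sum>t\<in>{1..T}. \<Sum>l\<in>{1..L}. \<theta> * (1 - x t l) + (1-\<theta>) * (1 - y t l))"
      unfolding Ho_def consH_def by (intro sum.cong refl) (simp add: algebra_simps)
    also have "\<dots> = \<theta> * Ho x + (1-\<theta>) * Ho y"
      unfolding Ho_def consH_def by (simp add: sum.distrib sum_distrib_left)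
    finally show ?thesis .
  qed
  have Fmix: "Fo (\<lambda>t l. \<theta> * x t l + (1-\<theta>) * y t l) \<le> \<theta> * Fo x + (1-\<theta>) * Fo y
     - (\<Sum>t\<in>{1..T}. \<Sum>l\<in>{1..L}. real (r t l)*\<theta>*(1-\<theta>)*((x t l - y t l)*(b t l (x t l) - b t l (y t l))))"
    if "x \<in> S" "y \<in> S" "0 \<le> \<theta>" "\<theta> \<le> 1" for x y \<theta>
  proof -
    have "Fo (\<lambda>t l. \<theta> * x t l + (1-\<theta>) * y t l) \<le> (\<Sum>t\<in>{1..T}. \<Sum>l\<in>{1..L}.
        \<theta>*(x t l*real (r t l)*b t l (x t l)) + (1-\<theta>)*(y t l*real (r t l)*b t l (y t l))
        - real (r t l)*\<theta>*(1-\<theta>)*((x t l - y t l)*(b t l (x t l) - b t l (y t l))))"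
      unfolding Fo_def objF_def
      by (intro sum_mono key_ineq bmono bconv) (use that in \<open>auto simp: inS\<close>)
    also have "\<dots> = \<theta> * Fo x + (1-\<theta>) * Fo y
     - (\<Sum>t\<in>{1..T}. \<Sum>l\<in>{1..L}. real (r t l)*\<theta>*(1-\<theta>)*((x t l - y t l)*(b t l (x t l) - b t l (y t l))))"
      unfolding Fo_def objF_def by (simp add: sum.distrib sum_distrib_left sum_subtractf)
    finally show ?thesis .
  qed
  have Mnn: "0 \<le> real (r t l)*\<theta>*(1-\<theta>)*((x t l - y t l)*(b t l (x t l) - b t l (y t l)))"
    if "x \<in> S" "y \<in> S" "0 \<le> \<theta>" "\<theta> \<le> 1" "t \<in> {1..T}" "l \<in> {1..L}" for x y \<theta> t l
  proof -
    have a: "0 \<le> (x t l - y t l)*(b t l (x t l) - b t l (y t l))"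
      using that by (intro mono_prod[OF bmono[OF that(5,6)]]) (auto simp: inS)
    have "0 \<le> real (r t l)*\<theta>*(1-\<theta>)" using that by simp
    then show ?thesis using a by (rule mult_nonneg_nonneg)
  qed
  have conv: "\<exists>w\<in>S. Fo w \<le> \<theta>*Fo x + (1-\<theta>)*Fo y \<and> Ho w \<le> \<theta>*Ho x + (1-\<theta>)*Ho y"
    if "x \<in> S" "y \<in> S" "0 \<le> \<theta>" "\<theta> \<le> 1" for x y \<theta>
  proof (intro bexI[of _ "\<lambda>t l. \<theta> * x t l + (1-\<theta>) * y t l"] conjI)
    have "0 \<le> (\<Sum>t\<in>{1..T}. \<Sum>l\<in>{1..L}. real (r t l)*\<theta>*(1-\<theta>)*((x t l - y t l)*(b t l (x t l) - b t l (y t l))))"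
      using Mnn[OF that] by (intro sum_nonneg) auto
    then show "Fo (\<lambda>t l. \<theta> * x t l + (1-\<theta>) * y t l) \<le> \<theta>*Fo x + (1-\<theta>)*Fo y"
      using Fmix[OF that] by linarith
  qed (use Hmix mixS that in auto)
  define one where "one = (\<lambda>(t::nat) (l::nat). 1::real)"
  have oneS: "one \<in> S" by (simp add: inS one_def)
  have Hone: "Ho one \<le> 0" by (simp add: Ho_def consH_def one_def)
  obtain lam0 where lam0: "lam0 \<ge> 0"
    "\<forall>x\<in>S. Fo x + lam0*(Ho x - \<epsilon>) \<ge> Inf (Fo ` {x\<in>S. Ho x \<le> \<epsilon>})"
    using strong_dual[OF oneS Hone Fnn Hnn ep conv] by blast
  define p where "p = Inf (Fo ` {x\<in>S. Ho x \<le> \<epsilon>})"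
  have lagr_eq: "lagr T L r b \<epsilon> \<rho> lam = Fo \<rho> + lam * (Ho \<rho> - \<epsilon>)" for \<rho> lam
    by (simp add: lagr_def Fo_def Ho_def)
  note mm = assms(10)[unfolded maxmin_optimal_def]
  have lamt0: "0 \<le> lamt" and rtS: "\<rho>t \<in> S" using mm by (auto simp: S_def)
  have rtmin: "Fo \<rho>t + lamt * (Ho \<rho>t - \<epsilon>) \<le> Fo \<rho> + lamt * (Ho \<rho> - \<epsilon>)" if "\<rho> \<in> S" for \<rho>
    using mm that by (auto simp: S_def lagr_eq)
  define Lt where "Lt = Fo \<rho>t + lamt * (Ho \<rho>t - \<epsilon>)"
  have Sne: "{\<rho>. feasible_box T L \<rho>} \<noteq> {}" using oneS by (auto simp: S_def)
  have "p \<le> dualfun T L r b \<epsilon> lam0"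
    unfolding dualfun_def
    by (rule cINF_greatest[OF Sne]) (use lam0 in \<open>auto simp: p_def lagr_eq S_def\<close>)
  also have "\<dots> \<le> dualfun T L r b \<epsilon> lamt" using mm lam0 by auto
  also have "\<dots> \<le> lagr T L r b \<epsilon> \<rho>t lamt"
    unfolding dualfun_def
  proof (rule cINF_lower)
    show "bdd_below ((\<lambda>\<rho>. lagr T L r b \<epsilon> \<rho> lamt) ` {\<rho>. feasible_box T L \<rho>})"
      by (rule bdd_belowI[of _ "Lt"]) (use rtmin in \<open>auto simp: Lt_def lagr_eq S_def\<close>)
  qed (use rtS S_def in auto)
  also have "\<dots> = Lt" by (simp add: lagr_eq Lt_def)
  finally have pLt: "p \<le> Lt" .
  have feasne: "Fo ` {x\<in>S. Ho x \<le> \<epsilon>} \<noteq> {}" using oneS Hone ep by force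
  have feasbb: "bdd_below (Fo ` {x\<in>S. Ho x \<le> \<epsilon>})"
    by (rule bdd_belowI[of _ 0]) (use Fnn in auto)
  have papprox: "\<exists>x\<in>S. Ho x \<le> \<epsilon> \<and> Fo x < p + \<delta>" if "0 < \<delta>" for \<delta>
  proof -
    have "p < p + \<delta>" using that by simp
    then obtain y where "y \<in> Fo ` {x\<in>S. Ho x \<le> \<epsilon>}" "y < p + \<delta>"
      using cInf_less_iff[OF feasne feasbb] unfolding p_def by blast
    then show ?thesis by auto
  qed
  define M where "M x = (\<Sum>t\<in>{1..T}. \<Sum>l\<in>{1..L}. real (r t l)*(1/2)*(1-1/2)*((x t l - \<rho>t t l)*(b t l (x t l) - b t l (\<rho>t t l))))" for x
  have Mbound: "M x \<le> (Fo x + lamt * (Ho x - \<epsilon>) - Lt) / 2" if xS: "x \<in> S" for x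
  proof -
    define m where "m = (\<lambda>t l. (1/2) * x t l + (1-1/2) * \<rho>t t l)"
    have mS: "m \<in> S" unfolding m_def by (rule mixS[OF xS rtS]) auto
    have Fm: "Fo m \<le> (1/2) * Fo x + (1-1/2) * Fo \<rho>t - M x"
      unfolding m_def M_def by (rule Fmix[OF xS rtS]) auto
    have Hm: "Ho m = (1/2) * Ho x + (1-1/2) * Ho \<rho>t" unfolding m_def by (rule Hmix)
    have "lamt * (Ho m - \<epsilon>) = (lamt * (Ho x - \<epsilon>) + lamt * (Ho \<rho>t - \<epsilon>))/2"
      using Hm by (simp add: algebra_simps)
    moreover have "Lt \<le> Fo m + lamt * (Ho m - \<epsilon>)" using rtmin[OF mS] Lt_def by simp
    moreover have "Fo m \<le> Fo x / 2 + Fo \<rho>t / 2 - M x" using Fm by simp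
    ultimately show ?thesis using Lt_def by (rule aux)
  qed
  have Mterm: "real (r t l)*(1/2)*(1-1/2)*((x t l - \<rho>t t l)*(b t l (x t l) - b t l (\<rho>t t l))) \<le> M x"
    if xS: "x \<in> S" and tl: "t \<in> {1..T}" "l \<in> {1..L}" for x t l
  proof -
    have "real (r t l)*(1/2)*(1-1/2)*((x t l - \<rho>t t l)*(b t l (x t l) - b t l (\<rho>t t l)))
       \<le> (\<Sum>l\<in>{1..L}. real (r t l)*(1/2)*(1-1/2)*((x t l - \<rho>t t l)*(b t l (x t l) - b t l (\<rho>t t l))))"
      by (rule member_le_sum) (use Mnn[OF xS rtS, of "1/2" t] tl in auto)
    also have "\<dots> \<le> M x" unfolding M_def
      by (rule member_le_sum) (use Mnn[OF xS rtS, of "1/2"] tl in \<open>auto intro!: sum_nonneg\<close>)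
    finally show ?thesis .
  qed
  have close: "\<exists>x\<in>S. Ho x \<le> \<epsilon> \<and> (\<forall>t\<in>{1..T}. \<forall>l\<in>{1..L}. \<bar>x t l - \<rho>t t l\<bar> < d)
      \<and> lamt * (Ho x - \<epsilon>) > -\<delta>'" if d: "0 < d" "d \<le> 1" and dp: "0 < \<delta>'" for d \<delta>'
  proof -
    define I where "I = {1..T} \<times> {1..L}"
    define c where "c = Min ((\<lambda>(t,l). d*(b t l d - b t l 0)/4) ` I)"
    have Ine: "I \<noteq> {}" using T1 L1 by (auto simp: I_def)
    have cpos: "0 < c" unfolding c_def
    proof (subst Min_gr_iff)
      show "\<forall>a\<in>(\<lambda>(t,l). d*(b t l d - b t l 0)/4) ` I. 0 < a"
      proof
        fix a assume "a \<in> (\<lambda>(t,l). d*(b t l d - b t l 0)/4) ` I"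
        then obtain t l where tl: "t \<in> {1..T}" "l \<in> {1..L}" "a = d*(b t l d - b t l 0)/4"
          by (auto simp: I_def)
        have "b t l 0 < b t l d" using bmono[OF tl(1,2)] d by (auto simp: strict_mono_on_def)
        then have "0 < d*(b t l d - b t l 0)" using d by simp
        then show "0 < a" using tl by simp
      qed
    qed (use Ine in \<open>auto simp: I_def\<close>)
    have cle: "c \<le> d*(b t l d - b t l 0)/4" if "t \<in> {1..T}" "l \<in> {1..L}" for t l
      unfolding c_def by (rule Min_le) (use that in \<open>auto simp: I_def\<close>)
    define \<delta> where "\<delta> = min \<delta>' (2*c)"
    have dpos: "0 < \<delta>" using dp cpos by (simp add: \<delta>_def)
    obtain x where xS: "x \<in> S" and Hx: "Ho x \<le> \<epsilon>" and Fx: "Fo x < p + \<delta>"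
      using papprox[OF dpos] by blast
    have lagx: "Fo x + lamt * (Ho x - \<epsilon>) \<le> Fo x"
      using lamt0 Hx by (simp add: mult_nonneg_nonpos)
    have d2c: "\<delta> \<le> 2*c" by (simp add: \<delta>_def)
    have "2 * M x \<le> Fo x + lamt * (Ho x - \<epsilon>) - Lt" using Mbound[OF xS] by simp
    then have Mx: "M x < c" using lagx Fx pLt d2c by linarith
    have near: "\<forall>t\<in>{1..T}. \<forall>l\<in>{1..L}. \<bar>x t l - \<rho>t t l\<bar> < d"
    proof (intro ballI, rule ccontr)
      fix t l assume tl: "t \<in> {1..T}" "l \<in> {1..L}" and nl: "\<not> \<bar>x t l - \<rho>t t l\<bar> < d"
      have g: "d*(b t l d - b t l 0) \<le> (x t l - \<rho>t t l)*(b t l (x t l) - b t l (\<rho>t t l))"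
        using xS rtS tl nl d by (intro gap[OF bmono[OF tl] bconv[OF tl]]) (auto simp: inS)
      have g0: "0 \<le> d*(b t l d - b t l 0)" using cle[OF tl] cpos by simp
      have "d*(b t l d - b t l 0) \<le> real (r t l) * (d*(b t l d - b t l 0))"
        using r1[OF tl] g0 by (simp add: mult_le_cancel_right1)
      also have "\<dots> \<le> real (r t l) * ((x t l - \<rho>t t l)*(b t l (x t l) - b t l (\<rho>t t l)))"
        using g by (intro mult_left_mono) auto
      finally have "c \<le> real (r t l)*(1/2)*(1-1/2)*((x t l - \<rho>t t l)*(b t l (x t l) - b t l (\<rho>t t l)))"
        using cle[OF tl] by simp
      then show False using Mterm[OF xS tl] Mx by linarith
    qed
    have "\<delta> \<le> \<delta>'" by (simp add: \<delta>_def)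
    then have "lamt * (Ho x - \<epsilon>) > -\<delta>'"
      using rtmin[OF xS] Lt_def Fx pLt by linarith
    then show ?thesis using xS Hx near by blast
  qed
  define N where "N = real (T * L)"
  have Npos: "0 < N" using T1 L1 by (simp add: N_def)
  have Hdiff: "Ho \<rho>t - Ho x \<le> N * d \<and> Ho x - Ho \<rho>t \<le> N * d"
    if "\<forall>t\<in>{1..T}. \<forall>l\<in>{1..L}. \<bar>x t l - \<rho>t t l\<bar> < d" for x d
  proof -
    have bd: "x t l - \<rho>t t l \<le> d \<and> \<rho>t t l - x t l \<le> d" if "t \<in> {1..T}" "l \<in> {1..L}" for t l
      using \<open>\<forall>t\<in>{1..T}. \<forall>l\<in>{1..L}. \<bar>x t l - \<rho>t t l\<bar> < d\<close> that by fastforce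
    have "Ho \<rho>t - Ho x = (\<Sum>t\<in>{1..T}. \<Sum>l\<in>{1..L}. x t l - \<rho>t t l)"
      unfolding Ho_def consH_def by (simp add: sum_subtractf[symmetric])
    also have "\<dots> \<le> (\<Sum>t\<in>{1..T}. \<Sum>l\<in>{1..L}. d)"
      using bd by (intro sum_mono) auto
    finally have a: "Ho \<rho>t - Ho x \<le> N * d" by (simp add: N_def)
    have "Ho x - Ho \<rho>t = (\<Sum>t\<in>{1..T}. \<Sum>l\<in>{1..L}. \<rho>t t l - x t l)"
      unfolding Ho_def consH_def by (simp add: sum_subtractf[symmetric])
    also have "\<dots> \<le> (\<Sum>t\<in>{1..T}. \<Sum>l\<in>{1..L}. d)"
      using bd by (intro sum_mono) auto
    finally have b: "Ho x - Ho \<rho>t \<le> N * d" by (simp add: N_def)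
    show ?thesis using a b by simp
  qed
  have Hrt: "Ho \<rho>t \<le> \<epsilon>"
  proof (rule ccontr)
    assume "\<not> ?thesis"
    define \<eta> where "\<eta> = Ho \<rho>t - \<epsilon>"
    have eta: "0 < \<eta>" using \<open>\<not> Ho \<rho>t \<le> \<epsilon>\<close> by (simp add: \<eta>_def)
    define d where "d = min 1 (\<eta>/(2*N))"
    have d: "0 < d" "d \<le> 1" using eta Npos by (auto simp: d_def)
    have Nd: "N * d \<le> \<eta>/2" using Npos eta
      by (simp add: d_def min_def field_simps)
    obtain x where "x \<in> S" "Ho x \<le> \<epsilon>" "\<forall>t\<in>{1..T}. \<forall>l\<in>{1..L}. \<bar>x t l - \<rho>t t l\<bar> < d"
      using close[OF d zero_less_one] by blast
    then show False using Hdiff[of x d] Nd eta \<eta>_def by linarith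
  qed
  have slack: "lamt * (Ho \<rho>t - \<epsilon>) = 0"
  proof (rule ccontr)
    assume ns: "\<not> ?thesis"
    then have lp: "0 < lamt" and hl: "Ho \<rho>t < \<epsilon>" using lamt0 Hrt by (auto simp: order_le_less)
    define \<eta> where "\<eta> = \<epsilon> - Ho \<rho>t"
    have eta: "0 < \<eta>" using hl by (simp add: \<eta>_def)
    define d where "d = min 1 (\<eta>/(2*N))"
    have d: "0 < d" "d \<le> 1" using eta Npos by (auto simp: d_def)
    have Nd: "N * d \<le> \<eta>/2" using Npos eta
      by (simp add: d_def min_def field_simps)
    have dp: "0 < lamt * \<eta> / 2" using lp eta by simp
    obtain x where x: "x \<in> S" "\<forall>t\<in>{1..T}. \<forall>l\<in>{1..L}. \<bar>x t l - \<rho>t t l\<bar> < d"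
        "lamt * (Ho x - \<epsilon>) > - (lamt * \<eta> / 2)"
      using close[OF d dp] by blast
    have "Ho x - \<epsilon> \<le> - (\<eta>/2)" using Hdiff[OF x(2)] Nd \<eta>_def by linarith
    then have "lamt * (Ho x - \<epsilon>) \<le> lamt * (- (\<eta>/2))" using lp by (intro mult_left_mono) auto
    then show False using x(3) by simp
  qed
  have prodin: "0 \<le> (\<Prod>l\<in>{1..L}. \<rho> t l) \<and> (\<Prod>l\<in>{1..L}. \<rho> t l) \<le> 1"
    if "\<rho> \<in> S" "t \<in> {1..T}" for \<rho> t
    using that by (auto simp: inS intro!: prod_nonneg prod_le_1)
  have GH: "consG T L \<rho> \<le> Ho \<rho>" if rS: "\<rho> \<in> S" for \<rho>
  proof -
    have "consG T L \<rho> \<le> (\<Sum>t\<in>{1..T}. 1 - (\<Prod>l\<in>{1..L}. \<rho> t l))"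
      unfolding consG_def by (rule prod_bound) (use prodin[OF rS] in auto)
    also have "\<dots> \<le> (\<Sum>t\<in>{1..T}. \<Sum>l\<in>{1..L}. 1 - \<rho> t l)"
      by (intro sum_mono prod_bound) (use rS in \<open>auto simp: inS\<close>)
    finally show ?thesis by (simp add: Ho_def consH_def)
  qed
  note pa1 = assms(9)[unfolded PA1_optimal_def]
  have rsS: "\<rho>s \<in> S" and Grs: "consG T L \<rho>s \<le> \<epsilon>" using pa1 by (auto simp: S_def)
  have lower: "Fo \<rho>s \<le> Fo \<rho>t"
    using pa1 rtS GH[OF rtS] Hrt by (auto simp: S_def Fo_def)
  have Hrs: "Ho \<rho>s \<le> N * \<epsilon>"
  proof -
    have "1 - \<rho>s t l \<le> \<epsilon>" if tl: "t \<in> {1..T}" "l \<in> {1..L}" for t l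
    proof -
      have "(\<Prod>t\<in>{1..T}. \<Prod>l\<in>{1..L}. \<rho>s t l) \<le> (\<Prod>l\<in>{1..L}. \<rho>s t l)"
        by (rule prod_le_factor) (use tl prodin[OF rsS] in auto)
      also have "\<dots> \<le> \<rho>s t l"
        by (rule prod_le_factor) (use tl rsS in \<open>auto simp: inS\<close>)
      finally show ?thesis using Grs by (simp add: consG_def)
    qed
    then have "Ho \<rho>s \<le> (\<Sum>t\<in>{1..T}. \<Sum>l\<in>{1..L}. \<epsilon>)"
      unfolding Ho_def consH_def by (intro sum_mono) auto
    then show ?thesis by (simp add: N_def)
  qed
  have "Lt \<le> Fo \<rho>s + lamt * (Ho \<rho>s - \<epsilon>)" using rtmin[OF rsS] Lt_def by simp
  also have "lamt * (Ho \<rho>s - \<epsilon>) \<le> lamt * (N * \<epsilon> - \<epsilon>)"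
    using Hrs lamt0 by (intro mult_left_mono) auto
  finally have up: "Fo \<rho>t \<le> Fo \<rho>s + lamt * (N * \<epsilon> - \<epsilon>)"
    using slack Lt_def by simp
  have eq: "lamt * (N * \<epsilon> - \<epsilon>) = lamt * (real (T * L) - 1) * \<epsilon>"
    by (simp add: N_def algebra_simps)
  have "Fo \<rho>t - Fo \<rho>s \<le> lamt * (real (T * L) - 1) * \<epsilon>" using up eq by linarith
  then show ?thesis using lower by (simp add: Fo_def)
qed

end
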